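(* Let $G=(V,E,w)$ be an edge-weighted graph with positive rational weights and no isolated vertices. The greedy algorithm applied to $U=V$ and the function $h$ returns a WPPIDS $S$ with $|S|\le\big(1+\ln(\delta_{\max}/\delta_{\min})\big)\cdot|S^*|$, where $\delta_{\max}\le\frac32 W$ and $\delta_{\min}\ge 1/L$; in particular $|S|\le\big(1+\ln(\tfrac32\cdot L\cdot W)\big)\cdot|S^*|$, where $S^*$ is a minimum-cardinality WPPIDS.
   Context: $N_A(v)=N(v)\cap A$, $W_A(v)=\sum_{u\in N_A(v)}w_{(v,u)}$, $W(v)=W_V(v)$, $W=\max_{v\in V}W(v)$. $h(A)=\sum_{v\in V}h_A(v)$ with $h_A(v)=W(v)/2$ if $v\in A$ or $W_A(v)\ge W(v)/2$, and $h_A(v)=W_A(v)$ otherwise. For $v$ with incident edge weights $w_1,\dots,w_d$, write $w_0=W(v)/2$ and each $w_i$ as a reduced fraction $p_i/q_i$; $l(v)=\mathrm{lcm}\{q_0,\dots,q_d\}$ and $L=\max_v l(v)$. $\Delta_x h(A)=h(A\cup\{x\})-h(A)$. The greedy algorithm: start with $S=\emptyset$; while some $u\in U\setminus S$ has $\Delta_u h(S)>0$, add to $S$ an element $x\in U\setminus S$ maximizing $\Delta_u h(S)$ (ties arbitrary); return $S$, with chosen elements $s_1,s_2,\dots$ in order, $S_i=\{s_1,\dots,s_i\}$. $\delta_{\max}=\Delta_{s_1}h(\emptyset)$ and $\delta_{\min}=\min_i\Delta_{s_i}h(S_{i-1})$. A WPPIDS is a set $S\subseteq V$ such that every $v\in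 V\setminus S$ satisfies $W_S(v)\ge W(v)/2$. *)

theory Defs
  imports Complex_Main
begin

definition weighted_graph :: "'a set \<Rightarrow> ('a \<Rightarrow> 'a \<Rightarrow> bool) \<Rightarrow> ('a \<Rightarrow> 'a \<Rightarrow> rat) \<Rightarrow> bool" where
  "weighted_graph V E w \<longleftrightarrow> finite V
     \<and> (\<forall>u v. E u v \<longrightarrow> u \<in> V \<and> v \<in> V)
     \<and> (\<forall>u v. E u v \<longrightarrow> E v u)
     \<and> (\<forall>v. \<not> E v v)
     \<and> (\<forall>u v. E u v \<longrightarrow> w u v = w v u \<and> w u v > 0)"

definition no_isolated :: "'a set \<Rightarrow> ('a \<Rightarrow> 'a \<Rightarrow> bool) \<Rightarrow> bool" where
  "no_isolated V E \<longleftrightarrow> (\<forall>v\<in>V. \<exists>u. E v u)"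

definition nbhd :: "'a set \<Rightarrow> ('a \<Rightarrow> 'a \<Rightarrow> bool) \<Rightarrow> 'a \<Rightarrow> 'a set" where
  "nbhd V E v = {u \<in> V. E v u}"

definition WA :: "'a set \<Rightarrow> ('a \<Rightarrow> 'a \<Rightarrow> bool) \<Rightarrow> ('a \<Rightarrow> 'a \<Rightarrow> rat) \<Rightarrow> 'a set \<Rightarrow> 'a \<Rightarrow> rat" where
  "WA V E w A v = (\<Sum>u\<in>nbhd V E v \<inter> A. w v u)"

definition Wv :: "'a set \<Rightarrow> ('a \<Rightarrow> 'a \<Rightarrow> bool) \<Rightarrow> ('a \<Rightarrow> 'a \<Rightarrow> rat) \<Rightarrow> 'a \<Rightarrow> rat" where
  "Wv V E w v = WA V E w V v"

definition Wmax :: "'a set \<Rightarrow> ('a \<Rightarrow> 'a \<Rightarrow> bool) \<Rightarrow> ('a \<Rightarrow> 'a \<Rightarrow> rat) \<Rightarrow> rat" where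
  "Wmax V E w = Max (Wv V E w ` V)"

definition hA :: "'a set \<Rightarrow> ('a \<Rightarrow> 'a \<Rightarrow> bool) \<Rightarrow> ('a \<Rightarrow> 'a \<Rightarrow> rat) \<Rightarrow> 'a set \<Rightarrow> 'a \<Rightarrow> rat" where
  "hA V E w A v = (if v \<in> A \<or> WA V E w A v \<ge> Wv V E w v / 2
                   then Wv V E w v / 2 else WA V E w A v)"

definition h :: "'a set \<Rightarrow> ('a \<Rightarrow> 'a \<Rightarrow> bool) \<Rightarrow> ('a \<Rightarrow> 'a \<Rightarrow> rat) \<Rightarrow> 'a set \<Rightarrow> rat" where
  "h V E w A = (\<Sum>v\<in>V. hA V E w A v)"

definition delta :: "'a set \<Rightarrow> ('a \<Rightarrow> 'a \<Rightarrow> bool) \<Rightarrow> ('a \<Rightarrow> 'a \<Rightarrow> rat) \<Rightarrow> 'a \<Rightarrow> 'a set \<Rightarrow> rat" where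
  "delta V E w x A = h V E w (A \<union> {x}) - h V E w A"

definition denom :: "rat \<Rightarrow> int" where
  "denom r = snd (quotient_of r)"

definition lv :: "'a set \<Rightarrow> ('a \<Rightarrow> 'a \<Rightarrow> bool) \<Rightarrow> ('a \<Rightarrow> 'a \<Rightarrow> rat) \<Rightarrow> 'a \<Rightarrow> int" where
  "lv V E w v = Lcm (denom ` (insert (Wv V E w v / 2) ((\<lambda>u. w v u) ` nbhd V E v)))"

definition Lmax :: "'a set \<Rightarrow> ('a \<Rightarrow> 'a \<Rightarrow> bool) \<Rightarrow> ('a \<Rightarrow> 'a \<Rightarrow> rat) \<Rightarrow> int" where
  "Lmax V E w = Max (lv V E w ` V)"

definition is_WPPIDS :: "'a set \<Rightarrow> ('a \<Rightarrow> 'a \<Rightarrow> bool) \<Rightarrow> ('a \<Rightarrow> 'a \<Rightarrow> rat) \<Rightarrow> 'a set \<Rightarrow> bool" where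
  "is_WPPIDS V E w S \<longleftrightarrow> S \<subseteq> V \<and> (\<forall>v\<in>V - S. WA V E w S v \<ge> Wv V E w v / 2)"

text \<open>A possible execution of the greedy algorithm on U = V and h, with arbitrary tie-breaking:
  the list ss = [s_1, s_2, ...] of chosen elements in order; S_i = set (take i ss).\<close>
definition greedy_run :: "'a set \<Rightarrow> ('a \<Rightarrow> 'a \<Rightarrow> bool) \<Rightarrow> ('a \<Rightarrow> 'a \<Rightarrow> rat) \<Rightarrow> 'a list \<Rightarrow> bool" where
  "greedy_run V E w ss \<longleftrightarrow>
     (\<forall>i < length ss.
        ss ! i \<in> V - set (take i ss)
      \<and> delta V E w (ss ! i) (set (take i ss)) > 0
      \<and> (\<forall>u \<in> V - set (take i ss). delta V E w u (set (take i ss)) \<le> delta V E w (ss ! i) (set (take i ss))))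
   \<and> (\<forall>u \<in> V - set ss. \<not> delta V E w u (set ss) > 0)"

definition delta_max :: "'a set \<Rightarrow> ('a \<Rightarrow> 'a \<Rightarrow> bool) \<Rightarrow> ('a \<Rightarrow> 'a \<Rightarrow> rat) \<Rightarrow> 'a list \<Rightarrow> rat" where
  "delta_max V E w ss = delta V E w (ss ! 0) {}"

definition delta_min :: "'a set \<Rightarrow> ('a \<Rightarrow> 'a \<Rightarrow> bool) \<Rightarrow> ('a \<Rightarrow> 'a \<Rightarrow> rat) \<Rightarrow> 'a list \<Rightarrow> rat" where
  "delta_min V E w ss = Min ((\<lambda>i. delta V E w (ss ! i) (set (take i ss))) ` {..<length ss})"

end

theory Submission
  imports Defs
begin


definition Fw :: "real \<Rightarrow> real \<Rightarrow> real \<Rightarrow> real" where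
  "Fw m c x = (if x \<le> m*c then x/c else m + m * ln (x/(m*c)))"

lemma Fw_step:
  fixes m c d x :: real
  assumes c: "0 < c" and m: "0 < m" and cd: "c \<le> d" and xd: "0 \<le> x - d" and xm: "x \<le> m*d"
  shows "1 \<le> Fw m c x - Fw m c (x - d)"
proof -
  have d: "0 < d" using c cd by linarith
  have x: "0 < x" using xd d by linarith
  have mdx: "1 \<le> m * d / x" using xm x by (simp add: field_simps)
  show ?thesis
  proof (cases "x \<le> m*c")
    case True
    then have "x - d \<le> m*c" using d by linarith
    then have "Fw m c x - Fw m c (x - d) = d / c" using True by (simp add: Fw_def diff_divide_distrib)
    also have "\<dots> \<ge> 1" using cd c by simp
    finally show ?thesis .
  next
    case False
    hence xmc: "m*c < x" by simp
    have mc: "0 < m*c" using m c by simp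
    show ?thesis
    proof (cases "x - d \<le> m*c")
      case True
      let ?y = "x - d"
      have y0: "0 \<le> ?y" using xd .
      have "ln ((m*c)/x) \<le> (m*c)/x - 1" using ln_le_minus_one mc x by simp
      moreover have "ln ((m*c)/x) = - ln (x/(m*c))" using mc x by (simp add: ln_div)
      ultimately have l: "ln (x/(m*c)) \<ge> 1 - (m*c)/x" by linarith
      have eq: "Fw m c x - Fw m c ?y = m + m * ln (x/(m*c)) - ?y / c"
        using True False by (simp add: Fw_def)
      have p: "0 \<le> (m*c - ?y) * (x - m*c)" using True xmc by simp
      have key: "m + m * (1 - (m*c)/x) - ?y / c \<ge> m * d / x"
      proof -
        have "m + m * (1 - (m*c)/x) - (x-d) / c - m * d / x = (m*c - (x-d)) * (x - m*c) / (c * x)"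
          using c x by (simp add: field_simps)
        also have "\<dots> \<ge> 0" using p c x by simp
        finally show ?thesis by simp
      qed
      have "m * ln (x/(m*c)) \<ge> m * (1 - (m*c)/x)" using l m by (simp add: mult_left_mono)
      then show ?thesis using eq key mdx by linarith
    next
      case False2: False
      let ?y = "x - d"
      have y: "0 < ?y" using False2 mc by linarith
      have eq: "Fw m c x - Fw m c ?y = m * (ln (x/(m*c)) - ln (?y/(m*c)))"
        using False2 False by (simp add: Fw_def algebra_simps)
      also have "ln (x/(m*c)) - ln (?y/(m*c)) = - ln (?y / x)"
        using x y mc m c by (simp add: ln_div)
      finally have eq2: "Fw m c x - Fw m c ?y = m * (- ln (?y / x))" .
      have "ln (?y/x) \<le> ?y/x - 1" using ln_le_minus_one x y by simp
      also have "?y/x - 1 = - (d/x)" using x by (simp add: field_simps)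
      finally have "- ln (?y/x) \<ge> d/x" by linarith
      hence "m * (d/x) \<le> m * (- ln (?y / x))" using m by (intro mult_left_mono) auto
      then show ?thesis using eq2 mdx by simp
    qed
  qed
qed

lemma wolsey_real:
  fixes t r :: "nat \<Rightarrow> real" and c m :: real and k :: nat
  assumes k: "1 \<le> k" and c: "0 < c" and tc: "\<forall>i<k. c \<le> t i"
    and rt: "\<forall>i<k. r i - r (Suc i) = t i" and rk: "r k = 0" and rm: "\<forall>i<k. r i \<le> m * t i"
  shows "real k \<le> m * (1 + ln (t 0 / c))"
proof -
  have rnn: "0 \<le> r (k - j)" if "j \<le> k" for j
    using that
  proof (induction j)
    case 0 then show ?case using rk by simp
  next
    case (Suc j)
    have i: "k - Suc j < k" "Suc (k - Suc j) = k - j" using Suc.prems by auto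
    have "r (k - Suc j) - r (Suc (k - Suc j)) = t (k - Suc j)" using rt i(1) by blast
    hence "r (k - Suc j) = t (k - Suc j) + r (k - j)" using i(2) by simp
    moreover have "c \<le> t (k - Suc j)" using tc i by simp
    ultimately show ?case using Suc c by simp
  qed
  have rnn': "0 \<le> r i" if "i \<le> k" for i using rnn[of "k - i"] that by simp
  have t0: "c \<le> t 0" using tc k by simp
  have "r 0 - r (Suc 0) = t 0" using rt k by simp
  hence r0: "r 0 = t 0 + r 1" by simp
  have r0pos: "0 < r 0" using r0 rnn'[of 1] k t0 c by simp
  have m: "0 < m"
  proof (rule ccontr)
    assume "\<not> 0 < m"
    hence "m * t 0 \<le> 0" using t0 c by (simp add: mult_nonpos_nonneg)
    moreover have "r 0 \<le> m * t 0" using rm k by simp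
    ultimately show False using r0pos by simp
  qed
  have steps: "1 \<le> Fw m c (r i) - Fw m c (r (Suc i))" if "i < k" for i
  proof -
    have "r i - r (Suc i) = t i" using rt that by blast
    hence "r (Suc i) = r i - t i" by simp
    thus ?thesis using Fw_step[OF c m, of "t i" "r i"] tc rm rnn'[of "Suc i"] that by simp
  qed
  have acc: "real j \<le> Fw m c (r 0) - Fw m c (r j)" if "j \<le> k" for j
    using that
  proof (induction j)
    case 0 then show ?case by simp
  next
    case (Suc j)
    then show ?case using steps[of j] by simp
  qed
  have "Fw m c (r k) = 0" using rk m c by (simp add: Fw_def)
  hence A: "real k \<le> Fw m c (r 0)" using acc[of k] by simp
  have B: "Fw m c (r 0) \<le> m * (1 + ln (t 0 / c))"
  proof (cases "r 0 \<le> m * c")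
    case True
    hence "Fw m c (r 0) \<le> m" using c by (simp add: Fw_def field_simps)
    moreover have "0 \<le> ln (t 0 / c)" using t0 c by simp
    ultimately show ?thesis using m by (simp add: algebra_simps add_increasing2)
  next
    case False
    have "r 0 \<le> m * t 0" using rm k by simp
    hence "r 0 / (m*c) \<le> (m * t 0) / (m*c)" using m c by (intro divide_right_mono) auto
    hence "ln (r 0 / (m*c)) \<le> ln ((m * t 0) / (m*c))"
      using m c r0pos t0 by (subst ln_le_cancel_iff) auto
    also have "(m * t 0) / (m*c) = t 0 / c" using m by simp
    finally have "ln (r 0 / (m*c)) \<le> ln (t 0 / c)" .
    thus ?thesis using False m by (simp add: Fw_def algebra_simps mult_left_mono)
  qed
  show ?thesis using A B by linarith
qed



lemma nbhd_sub: "weighted_graph V E w \<Longrightarrow> nbhd V E v \<subseteq> V"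
  by (auto simp: nbhd_def)

lemma nbhd_fin: "weighted_graph V E w \<Longrightarrow> finite (nbhd V E v)"
  by (auto simp: nbhd_def weighted_graph_def)

lemma w_pos: "weighted_graph V E w \<Longrightarrow> u \<in> nbhd V E v \<Longrightarrow> 0 < w v u"
  by (auto simp: nbhd_def weighted_graph_def)

lemma WA_nonneg: assumes G: "weighted_graph V E w" shows "0 \<le> WA V E w A v"
  unfolding WA_def by (rule sum_nonneg) (use w_pos[OF G] in force)

lemma WA_mono: assumes G: "weighted_graph V E w" and AB: "A \<subseteq> B"
  shows "WA V E w A v \<le> WA V E w B v"
  unfolding WA_def
  by (rule sum_mono2) (use AB nbhd_fin[OF G] in \<open>auto intro: less_imp_le w_pos[OF G]\<close>)

lemma Wv_pos: assumes G: "weighted_graph V E w" and ni: "no_isolated V E" and v: "v \<in> V"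
  shows "0 < Wv V E w v"
proof -
  obtain u where "E v u" using ni v by (auto simp: no_isolated_def)
  hence u: "u \<in> nbhd V E v" using G by (auto simp: nbhd_def weighted_graph_def)
  have "nbhd V E v \<inter> V = nbhd V E v" using nbhd_sub[OF G] by auto
  hence "Wv V E w v = (\<Sum>x\<in>nbhd V E v. w v x)" by (simp add: Wv_def WA_def)
  also have "\<dots> > 0" using u nbhd_fin[OF G] w_pos[OF G]
    by (intro sum_pos) auto
  finally show ?thesis .
qed

lemma hA_le: "hA V E w A v \<le> Wv V E w v / 2"
  by (auto simp: hA_def)

lemma hA_le_WA: "v \<notin> A \<Longrightarrow> hA V E w A v \<le> WA V E w A v"
  by (auto simp: hA_def)

lemma hA_mono: assumes G: "weighted_graph V E w" and AB: "A \<subseteq> B"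
  shows "hA V E w A v \<le> hA V E w B v"
  using WA_mono[OF G AB, of v] AB by (auto simp: hA_def)

lemma WA_union: assumes G: "weighted_graph V E w" and T: "finite T"
  shows "WA V E w (A \<union> T) v = WA V E w A v + (\<Sum>x\<in>T. if x \<in> nbhd V E v \<and> x \<notin> A then w v x else 0)"
proof -
  have fin: "finite (nbhd V E v)" using nbhd_fin[OF G] .
  have "nbhd V E v \<inter> (A \<union> T) = (nbhd V E v \<inter> A) \<union> {x\<in>T. x \<in> nbhd V E v \<and> x \<notin> A}" by auto
  hence "WA V E w (A \<union> T) v = (\<Sum>x\<in>nbhd V E v \<inter> A. w v x) + (\<Sum>x\<in>{x\<in>T. x \<in> nbhd V E v \<and> x \<notin> A}. w v x)"
    unfolding WA_def using fin T by (simp add: sum.union_disjoint disjoint_iff)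
  also have "(\<Sum>x\<in>{x\<in>T. x \<in> nbhd V E v \<and> x \<notin> A}. w v x) = (\<Sum>x\<in>T. if x \<in> nbhd V E v \<and> x \<notin> A then w v x else 0)"
    using T by (simp add: sum.inter_filter)
  finally show ?thesis by (simp add: WA_def)
qed

lemma hA_submod: assumes G: "weighted_graph V E w" and T: "finite T"
  shows "hA V E w (A \<union> T) v - hA V E w A v \<le> (\<Sum>x\<in>T. hA V E w (A \<union> {x}) v - hA V E w A v)"
proof -
  let ?c = "Wv V E w v / 2"
  have nn: "0 \<le> hA V E w (A \<union> {x}) v - hA V E w A v" for x
    using hA_mono[OF G, of A "A \<union> {x}" v] by auto
  show ?thesis
  proof (cases "hA V E w A v = ?c")
    case True
    have "hA V E w (A \<union> T) v \<le> ?c" by (rule hA_le)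
    hence "hA V E w (A \<union> T) v - hA V E w A v \<le> 0" using True by simp
    also have "0 \<le> (\<Sum>x\<in>T. hA V E w (A \<union> {x}) v - hA V E w A v)" using nn by (simp add: sum_nonneg)
    finally show ?thesis .
  next
    case False
    have nc: "\<not> (v \<in> A \<or> WA V E w A v \<ge> ?c)"
    proof
      assume "v \<in> A \<or> WA V E w A v \<ge> ?c"
      hence "hA V E w A v = ?c" unfolding hA_def by presburger
      with False show False by simp
    qed
    hence vA: "v \<notin> A" and lt: "WA V E w A v < ?c" by auto
    have hAe: "hA V E w A v = WA V E w A v" using nc unfolding hA_def by presburger
    show ?thesis
    proof (cases "\<exists>x\<in>T. hA V E w (A \<union> {x}) v = ?c")
      case True
      then obtain x where x: "x \<in> T" "hA V E w (A \<union> {x}) v = ?c" by blast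
      have "hA V E w (A \<union> T) v - hA V E w A v \<le> hA V E w (A \<union> {x}) v - hA V E w A v"
        using x hA_le[of V E w "A \<union> T" v] by simp
      also have "\<dots> \<le> (\<Sum>x\<in>T. hA V E w (A \<union> {x}) v - hA V E w A v)"
        by (rule member_le_sum) (use x T nn in auto)
      finally show ?thesis .
    next
      case False2: False
      have "\<forall>x\<in>T. hA V E w (A \<union> {x}) v - hA V E w A v = (if x \<in> nbhd V E v \<and> x \<notin> A then w v x else 0)"
      proof
        fix x assume x: "x \<in> T"
        hence ne: "hA V E w (A \<union> {x}) v \<noteq> ?c" using False2 by blast
        have nc2: "\<not> (v \<in> A \<union> {x} \<or> WA V E w (A \<union> {x}) v \<ge> ?c)"
        proof
          assume "v \<in> A \<union> {x} \<or> WA V E w (A \<union> {x}) v \<ge> ?c"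
          hence "hA V E w (A \<union> {x}) v = ?c" unfolding hA_def by presburger
          with ne show False by simp
        qed
        have "hA V E w (A \<union> {x}) v = WA V E w (A \<union> {x}) v" using nc2 unfolding hA_def by presburger
        moreover have "WA V E w (A \<union> {x}) v = WA V E w A v + (if x \<in> nbhd V E v \<and> x \<notin> A then w v x else 0)"
          using WA_union[OF G, of "{x}" A v] by simp
        ultimately show "hA V E w (A \<union> {x}) v - hA V E w A v = (if x \<in> nbhd V E v \<and> x \<notin> A then w v x else 0)"
          using hAe by simp
      qed
      hence "(\<Sum>x\<in>T. hA V E w (A \<union> {x}) v - hA V E w A v) = (\<Sum>x\<in>T. if x \<in> nbhd V E v \<and> x \<notin> A then w v x else 0)"
        by (intro sum.cong refl) blast
      also have "\<dots> = WA V E w (A \<union> T) v - WA V E w A v" using WA_union[OF G T, of A v] by simp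
      finally have eq: "(\<Sum>x\<in>T. hA V E w (A \<union> {x}) v - hA V E w A v) = WA V E w (A \<union> T) v - WA V E w A v" .
      have vT: "v \<notin> T"
      proof
        assume "v \<in> T"
        hence "hA V E w (A \<union> {v}) v = ?c" by (simp add: hA_def)
        thus False using False2 \<open>v \<in> T\<close> by blast
      qed
      have "hA V E w (A \<union> T) v \<le> WA V E w (A \<union> T) v" using vA vT by (intro hA_le_WA) auto
      thus ?thesis using eq hAe by simp
    qed
  qed
qed

lemma delta_expand: "delta V E w x A = (\<Sum>v\<in>V. hA V E w (A \<union> {x}) v - hA V E w A v)"
  by (simp add: delta_def h_def sum_subtractf)

lemma delta_nonneg: "weighted_graph V E w \<Longrightarrow> 0 \<le> delta V E w x A"
  unfolding delta_expand by (rule sum_nonneg) (use hA_mono[of V E w A "A \<union> {x}"] in auto)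

lemma h_submod: assumes G: "weighted_graph V E w" and T: "finite T"
  shows "h V E w (A \<union> T) - h V E w A \<le> (\<Sum>x\<in>T. delta V E w x A)"
proof -
  have "h V E w (A \<union> T) - h V E w A = (\<Sum>v\<in>V. hA V E w (A \<union> T) v - hA V E w A v)"
    by (simp add: h_def sum_subtractf)
  also have "\<dots> \<le> (\<Sum>v\<in>V. \<Sum>x\<in>T. hA V E w (A \<union> {x}) v - hA V E w A v)"
    by (rule sum_mono) (rule hA_submod[OF G T])
  also have "\<dots> = (\<Sum>x\<in>T. \<Sum>v\<in>V. hA V E w (A \<union> {x}) v - hA V E w A v)"
    by (rule sum.swap)
  also have "\<dots> = (\<Sum>x\<in>T. delta V E w x A)" by (simp add: delta_expand)
  finally show ?thesis .
qed

lemma h_le: "h V E w A \<le> (\<Sum>v\<in>V. Wv V E w v / 2)"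
  unfolding h_def by (rule sum_mono) (rule hA_le)

lemma h_full: assumes G: "weighted_graph V E w" and S: "is_WPPIDS V E w S" and SB: "S \<subseteq> B"
  shows "h V E w B = (\<Sum>v\<in>V. Wv V E w v / 2)"
  unfolding h_def
proof (rule sum.cong[OF refl])
  fix v assume v: "v \<in> V"
  show "hA V E w B v = Wv V E w v / 2"
  proof (cases "v \<in> B")
    case True thus ?thesis by (simp add: hA_def)
  next
    case False
    hence "v \<in> V - S" using v SB by auto
    hence "WA V E w S v \<ge> Wv V E w v / 2" using S by (simp add: is_WPPIDS_def)
    moreover have "WA V E w S v \<le> WA V E w B v" by (rule WA_mono[OF G SB])
    ultimately show ?thesis by (simp add: hA_def)
  qed
qed

lemma delta_pos: assumes G: "weighted_graph V E w" and v: "v \<in> V" and vA: "v \<notin> A"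
  and lt: "WA V E w A v < Wv V E w v / 2"
  shows "0 < delta V E w v A"
proof -
  have "0 < hA V E w (A \<union> {v}) v - hA V E w A v" using vA lt by (simp add: hA_def)
  also have "\<dots> \<le> delta V E w v A" unfolding delta_expand
    by (rule member_le_sum) (use v G hA_mono[OF G, of A "A \<union> {v}"] in \<open>auto simp: weighted_graph_def\<close>)
  finally show ?thesis .
qed



lemma denom_int: assumes "denom r dvd n" shows "r * of_int n \<in> \<int>"
proof -
  obtain p q where pq: "quotient_of r = (p, q)" by (cases "quotient_of r") auto
  have q: "q > 0" using quotient_of_denom_pos' [of r] pq by simp
  have r: "r = of_int p / of_int q" using quotient_of_div[OF pq] .
  obtain j where n: "n = q * j" using assms pq by (auto simp: denom_def elim: dvdE)
  have "r * of_int n = of_int (p * j)" using q r n by simp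
  thus ?thesis by simp
qed

lemma denom_pos: "0 < denom r"
  using quotient_of_denom_pos' by (simp add: denom_def)

lemma lv_pos: assumes G: "weighted_graph V E w" shows "0 < lv V E w v"
proof -
  let ?X = "denom ` (insert (Wv V E w v / 2) ((\<lambda>u. w v u) ` nbhd V E v))"
  have fin: "finite ?X" using nbhd_fin[OF G] by simp
  have "0 \<notin> ?X" using denom_pos by (metis imageE less_irrefl)
  hence "Lcm ?X \<noteq> 0" using Lcm_0_iff[OF fin] by simp
  moreover have "0 \<le> Lcm ?X"
    by (rule Lcm_int_greater_eq_0)
  ultimately have "0 < Lcm ?X" by linarith
  thus ?thesis unfolding lv_def .
qed

lemma dvd_lv: "r \<in> insert (Wv V E w v / 2) ((\<lambda>u. w v u) ` nbhd V E v) \<Longrightarrow> denom r dvd lv V E w v"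
  unfolding lv_def by (rule dvd_Lcm_int, rule imageI)

lemma hA_int: assumes G: "weighted_graph V E w"
  shows "hA V E w A v * of_int (lv V E w v) \<in> \<int>"
proof (cases "v \<in> A \<or> WA V E w A v \<ge> Wv V E w v / 2")
  case True
  hence "hA V E w A v = Wv V E w v / 2" by (simp add: hA_def)
  moreover have "Wv V E w v / 2 * of_int (lv V E w v) \<in> \<int>"
    by (rule denom_int, rule dvd_lv, simp)
  ultimately show ?thesis by metis
next
  case False
  hence "hA V E w A v = WA V E w A v" by (simp add: hA_def)
  also have "\<dots> * of_int (lv V E w v) = (\<Sum>u\<in>nbhd V E v \<inter> A. w v u * of_int (lv V E w v))"
    by (simp add: WA_def sum_distrib_right)
  moreover have "(\<Sum>u\<in>nbhd V E v \<inter> A. w v u * of_int (lv V E w v)) \<in> \<int>"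
  proof (rule Ints_sum)
    fix u assume "u \<in> nbhd V E v \<inter> A"
    hence "w v u \<in> insert (Wv V E w v / 2) ((\<lambda>u. w v u) ` nbhd V E v)" by auto
    thus "w v u * of_int (lv V E w v) \<in> \<int>" by (rule denom_int[OF dvd_lv])
  qed
  ultimately show ?thesis by simp
qed

lemma delta_ge_L: assumes G: "weighted_graph V E w" and pos: "0 < delta V E w x A"
  shows "1 / of_int (Lmax V E w) \<le> delta V E w x A"
proof -
  let ?t = "\<lambda>v. hA V E w (A \<union> {x}) v - hA V E w A v"
  have fin: "finite V" using G by (simp add: weighted_graph_def)
  have nn: "0 \<le> ?t v" for v using hA_mono[OF G, of A "A \<union> {x}" v] by auto
  obtain v where v: "v \<in> V" "0 < ?t v"
  proof (rule ccontr)
    assume "\<not> thesis"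
    hence "\<forall>v\<in>V. ?t v \<le> 0" using that by force
    hence "delta V E w x A \<le> 0" unfolding delta_expand by (simp add: sum_nonpos)
    thus False using pos by simp
  qed
  have lp: "0 < lv V E w v" by (rule lv_pos[OF G])
  have "?t v * of_int (lv V E w v) \<in> \<int>"
    using hA_int[OF G, of "A \<union> {x}" v] hA_int[OF G, of A v] by (simp add: left_diff_distrib Ints_diff)
  then obtain z where z: "?t v * of_int (lv V E w v) = of_int z" by (auto elim: Ints_cases)
  have "0 < ?t v * of_int (lv V E w v)" using v lp by simp
  hence "0 < (of_int z :: rat)" using z by simp
  hence "1 \<le> ?t v * of_int (lv V E w v)" using z by simp
  hence t1: "1 / of_int (lv V E w v) \<le> ?t v" using lp by (simp add: field_simps)
  have "lv V E w v \<le> Lmax V E w" unfolding Lmax_def using fin v by simp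
  hence "1 / of_int (Lmax V E w) \<le> (1 / of_int (lv V E w v) :: rat)" using lp
    by (simp add: frac_le)
  also note t1
  also have "?t v \<le> delta V E w x A" unfolding delta_expand
    by (rule member_le_sum) (use v fin nn in auto)
  finally show ?thesis .
qed

lemma hA_nonneg: "weighted_graph V E w \<Longrightarrow> 0 \<le> hA V E w A v"
  unfolding hA_def using WA_nonneg[of V E w A v] WA_nonneg[of V E w V v]
  by (auto simp: Wv_def)

lemma delta_max_bound: assumes G: "weighted_graph V E w" and s: "s \<in> V"
  shows "delta V E w s {} \<le> 3/2 * Wmax V E w"
proof -
  have fin: "finite V" using G by (simp add: weighted_graph_def)
  have "h V E w {} \<ge> 0" unfolding h_def by (rule sum_nonneg) (rule hA_nonneg[OF G])
  hence "delta V E w s {} \<le> h V E w {s}" by (simp add: delta_def)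
  also have "\<dots> \<le> (\<Sum>v\<in>V. (if v = s then Wv V E w s / 2 else 0) + (if v \<in> nbhd V E s then w s v else 0))"
    unfolding h_def
  proof (rule sum_mono)
    fix v assume v: "v \<in> V"
    show "hA V E w {s} v \<le> (if v = s then Wv V E w s / 2 else 0) + (if v \<in> nbhd V E s then w s v else 0)"
    proof (cases "v = s")
      case True
      have "0 \<le> (if v \<in> nbhd V E s then w s v else 0)" using w_pos[OF G] by (simp add: less_imp_le)
      thus ?thesis using True hA_le[of V E w "{s}" s] by simp
    next
      case False
      have "hA V E w {s} v \<le> WA V E w {s} v" using False by (intro hA_le_WA) simp
      also have "WA V E w {s} v = (if v \<in> nbhd V E s then w s v else 0)"
      proof -
        have e: "nbhd V E v \<inter> {s} = (if v \<in> nbhd V E s then {s} else {})"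
          using G v s by (auto simp: nbhd_def weighted_graph_def)
        have "v \<in> nbhd V E s \<Longrightarrow> w v s = w s v"
          using G by (auto simp: nbhd_def weighted_graph_def)
        thus ?thesis unfolding WA_def e by auto
      qed
      finally show ?thesis using False by simp
    qed
  qed
  also have "\<dots> = Wv V E w s / 2 + (\<Sum>v\<in>V. if v \<in> nbhd V E s then w s v else 0)"
    using fin s by (simp add: sum.distrib)
  also have "(\<Sum>v\<in>V. if v \<in> nbhd V E s then w s v else 0) = Wv V E w s"
    using fin by (simp add: sum.inter_filter[symmetric] Wv_def WA_def Int_commute Int_def)
  also have "Wv V E w s / 2 + Wv V E w s = 3/2 * Wv V E w s" by simp
  also have "Wv V E w s \<le> Wmax V E w" unfolding Wmax_def using fin s by simp
  hence "3/2 * Wv V E w s \<le> 3/2 * Wmax V E w" by simp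
  finally show ?thesis .
qed



theorem mainTheorem14:
  fixes V :: "'a set" and E :: "'a \<Rightarrow> 'a \<Rightarrow> bool" and w :: "'a \<Rightarrow> 'a \<Rightarrow> rat"
    and ss :: "'a list" and Sstar :: "'a set"
  assumes G: "weighted_graph V E w"
    and nonempty: "V \<noteq> {}"
    and noiso: "no_isolated V E"
    and run: "greedy_run V E w ss"
    and opt: "is_WPPIDS V E w Sstar"
    and min: "\<forall>T. is_WPPIDS V E w T \<longrightarrow> card Sstar \<le> card T"
  shows "is_WPPIDS V E w (set ss)
    \<and> real (card (set ss)) \<le> (1 + ln (real_of_rat (delta_max V E w ss) / real_of_rat (delta_min V E w ss))) * real (card Sstar)
    \<and> delta_max V E w ss \<le> 3/2 * Wmax V E w
    \<and> delta_min V E w ss \<ge> 1 / of_int (Lmax V E w)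
    \<and> real (card (set ss)) \<le> (1 + ln (3/2 * real_of_int (Lmax V E w) * real_of_rat (Wmax V E w))) * real (card Sstar)"
proof -
  have fin: "finite V" using G by (simp add: weighted_graph_def)
  define k where "k = length ss"
  define S where "S i = set (take i ss)" for i
  define th where "th i = delta V E w (ss ! i) (S i)" for i
  define Hf where "Hf = (\<Sum>v\<in>V. Wv V E w v / 2)"
  define R where "R i = Hf - h V E w (S i)" for i
  have runI: "\<forall>i<k. ss ! i \<in> V - S i \<and> 0 < th i \<and> (\<forall>u\<in>V - S i. delta V E w u (S i) \<le> th i)"
    using run by (simp add: greedy_run_def k_def S_def th_def)
  have runF: "\<forall>u\<in>V - set ss. \<not> 0 < delta V E w u (set ss)" using run by (simp add: greedy_run_def)
  have ssV: "set ss \<subseteq> V" using runI by (auto simp: in_set_conv_nth k_def)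
  have SV: "S i \<subseteq> V" for i using ssV set_take_subset[of i ss] by (auto simp: S_def)
  have wp: "is_WPPIDS V E w (set ss)"
    unfolding is_WPPIDS_def
  proof (intro conjI ballI)
    show "set ss \<subseteq> V" by (rule ssV)
    fix v assume v: "v \<in> V - set ss"
    show "Wv V E w v / 2 \<le> WA V E w (set ss) v"
    proof (rule ccontr)
      assume "\<not> ?thesis"
      hence "0 < delta V E w v (set ss)" using delta_pos[OF G, of v "set ss"] v by auto
      thus False using runF v by blast
    qed
  qed
  have k1: "1 \<le> k"
  proof (rule ccontr)
    assume "\<not> 1 \<le> k"
    hence "ss = []" by (cases ss) (auto simp: k_def)
    obtain v where v: "v \<in> V" using nonempty by blast
    have "0 < Wv V E w v" by (rule Wv_pos[OF G noiso v])
    moreover have "WA V E w {} v = 0" by (simp add: WA_def)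
    moreover have "WA V E w {} v \<ge> Wv V E w v / 2" using wp \<open>ss = []\<close> v by (simp add: is_WPPIDS_def)
    ultimately show False by simp
  qed
  have Ssuc: "S (Suc i) = S i \<union> {ss ! i}" if "i < k" for i
    using that by (simp add: S_def take_Suc_conv_app_nth k_def)
  have Rstep: "R i - R (Suc i) = th i" if "i < k" for i
    using Ssuc[OF that] by (simp add: R_def th_def delta_def)
  have Rk: "R k = 0"
  proof -
    have "S k = set ss" by (simp add: S_def k_def)
    thus ?thesis using h_full[OF G wp, of "set ss"] by (simp add: R_def Hf_def)
  qed
  have finS: "finite Sstar" using opt fin by (auto simp: is_WPPIDS_def intro: finite_subset)
  have Rm: "R i \<le> of_nat (card Sstar) * th i" if i: "i < k" for i
  proof -
    have "Hf = h V E w (S i \<union> Sstar)" using h_full[OF G opt, of "S i \<union> Sstar"] by (simp add: Hf_def)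
    hence "R i = h V E w (S i \<union> Sstar) - h V E w (S i)" by (simp add: R_def)
    also have "\<dots> \<le> (\<Sum>x\<in>Sstar. delta V E w x (S i))" by (rule h_submod[OF G finS])
    also have "\<dots> \<le> (\<Sum>x\<in>Sstar. th i)"
    proof (rule sum_mono)
      fix x assume x: "x \<in> Sstar"
      show "delta V E w x (S i) \<le> th i"
      proof (cases "x \<in> S i")
        case True
        hence "S i \<union> {x} = S i" by auto
        hence "delta V E w x (S i) = 0" by (simp add: delta_def)
        thus ?thesis using runI i by (simp add: less_imp_le)
      next
        case False
        hence "x \<in> V - S i" using x opt by (auto simp: is_WPPIDS_def)
        thus ?thesis using runI i by blast
      qed
    qed
    also have "\<dots> = of_nat (card Sstar) * th i" by simp
    finally show ?thesis .
  qed
  have dmin_eq: "delta_min V E w ss = Min (th ` {..<k})"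
    by (simp add: delta_min_def th_def S_def k_def)
  have dmax_eq: "delta_max V E w ss = th 0"
    by (simp add: delta_max_def th_def S_def)
  have ne: "th ` {..<k} \<noteq> {}" using k1 by (auto simp: lessThan_empty_iff)
  have dmin_le: "delta_min V E w ss \<le> th i" if "i < k" for i
    unfolding dmin_eq using that by (intro Min_le) auto
  obtain j where j: "j < k" "delta_min V E w ss = th j"
    using Min_in[OF _ ne] dmin_eq by auto
  have dmin_pos: "0 < delta_min V E w ss" using j runI by simp
  have s0: "ss ! 0 \<in> V" using runI k1 by auto
  have dmaxb: "delta_max V E w ss \<le> 3/2 * Wmax V E w"
    using delta_max_bound[OF G s0] by (simp add: dmax_eq th_def S_def)
  have dminb: "1 / of_int (Lmax V E w) \<le> delta_min V E w ss"
    using j runI delta_ge_L[OF G, of "ss ! j" "S j"] by (simp add: th_def)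
  have wr: "real k \<le> real (card Sstar) * (1 + ln (real_of_rat (th 0) / real_of_rat (delta_min V E w ss)))"
  proof (rule wolsey_real[where r = "\<lambda>i. real_of_rat (R i)"])
    show "1 \<le> k" by (rule k1)
    show "0 < real_of_rat (delta_min V E w ss)" using dmin_pos by simp
    show "\<forall>i<k. real_of_rat (delta_min V E w ss) \<le> real_of_rat (th i)"
      using dmin_le by (simp add: of_rat_less_eq)
    show "\<forall>i<k. real_of_rat (R i) - real_of_rat (R (Suc i)) = real_of_rat (th i)"
      using Rstep by (simp add: of_rat_diff[symmetric])
    show "real_of_rat (R k) = 0" using Rk by simp
    show "\<forall>i<k. real_of_rat (R i) \<le> real (card Sstar) * real_of_rat (th i)"
    proof (intro allI impI)
      fix i assume "i < k"
      hence "real_of_rat (R i) \<le> real_of_rat (of_nat (card Sstar) * th i)"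
        using Rm by (simp add: of_rat_less_eq)
      thus "real_of_rat (R i) \<le> real (card Sstar) * real_of_rat (th i)" by (simp add: of_rat_mult)
    qed
  qed
  have ck: "real (card (set ss)) \<le> real k" using card_length[of ss] by (simp add: k_def)
  have B2: "real (card (set ss)) \<le> (1 + ln (real_of_rat (delta_max V E w ss) / real_of_rat (delta_min V E w ss))) * real (card Sstar)"
    using wr ck dmax_eq by (simp add: mult.commute)
  obtain v0 where v0: "v0 \<in> V" using nonempty by blast
  have Lpos: "0 < Lmax V E w"
  proof -
    have "lv V E w v0 \<le> Lmax V E w" unfolding Lmax_def using fin v0 by simp
    thus ?thesis using lv_pos[OF G, of v0] by simp
  qed
  define a where "a = real_of_rat (delta_max V E w ss)"
  define b where "b = real_of_rat (delta_min V E w ss)"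
  define L where "L = real_of_int (Lmax V E w)"
  define W where "W = real_of_rat (Wmax V E w)"
  have a: "0 < a" unfolding a_def using dmax_eq runI k1 by simp
  have b: "0 < b" unfolding b_def using dmin_pos by simp
  have L: "0 < L" unfolding L_def using Lpos by simp
  have bL: "1 / L \<le> b"
  proof -
    have "real_of_rat (1 / of_int (Lmax V E w)) \<le> b" unfolding b_def using dminb by (simp only: of_rat_less_eq)
    thus ?thesis by (simp add: L_def of_rat_divide)
  qed
  have aW: "a \<le> 3/2 * W"
  proof -
    have "a \<le> real_of_rat (3/2 * Wmax V E w)" unfolding a_def using dmaxb by (simp only: of_rat_less_eq)
    thus ?thesis by (simp add: W_def of_rat_mult of_rat_divide)
  qed
  have "a / b \<le> a / (1/L)" using a b L bL by (intro divide_left_mono) auto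
  also have "\<dots> = a * L" by simp
  also have "\<dots> \<le> 3/2 * W * L" using aW L by (intro mult_right_mono) auto
  finally have abW: "a / b \<le> 3/2 * L * W" by (simp add: mult_ac)
  have "ln (a / b) \<le> ln (3/2 * L * W)"
  proof -
    have p1: "0 < a / b" using a b by simp
    hence p2: "0 < 3/2 * L * W" using abW by linarith
    show ?thesis using abW p1 p2 by (subst ln_le_cancel_iff) auto
  qed
  hence "(1 + ln (a / b)) * real (card Sstar) \<le> (1 + ln (3/2 * L * W)) * real (card Sstar)"
    by (intro mult_right_mono) auto
  hence B5: "real (card (set ss)) \<le> (1 + ln (3/2 * real_of_int (Lmax V E w) * real_of_rat (Wmax V E w))) * real (card Sstar)"
    using B2 unfolding a_def b_def L_def W_def by linarith
  show ?thesis using wp B2 dmaxb dminb B5 by simp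
qed

end
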